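(* Let $H$ be a Hilbert space, $\varrho\in\mathbb{R}_{>0}$, and let $F,G:H_{\varrho,0}(\mathbb{R})\otimes H\to H_{\varrho,-1}(\mathbb{R})\otimes H$ be Lipschitz continuous with $$\frac{|F|_{\mathrm{Lip}}+|G|_{\mathrm{Lip}}}{2}<1.$$ Let $u,v\in H_{\varrho,0}(\mathbb{R})\otimes H$ satisfy $\partial_{0,\varrho}u=F(u)$ and $\partial_{0,\varrho}v=G(v)$. Then $$|u-v|_{\varrho,0}\le\frac{1}{1-\frac{|F|_{\mathrm{Lip}}+|G|_{\mathrm{Lip}}}{2}}\sup_{x\in H_{\varrho,0}(\mathbb{R})\otimes H}|F(x)-G(x)|_{\varrho,-1}.$$
   Context: $H$ is a Hilbert space. For $\varrho\in\mathbb{R}$, $H_{\varrho,0}(\mathbb{R})\otimes H$ is the Hilbert space of (classes of) measurable $f:\mathbb{R}\to H$ with $|f|_{\varrho,0}^2=\int_{\mathbb{R}}|f(t)|_H^2e^{-2\varrho t}dt<\infty$. For $\varrho\ne0$, $\partial_{0,\varrho}$ is the (distributional) derivative in $H_{\varrho,0}(\mathbb{R})\otimes H$ with maximal domain $H_{\varrho,1}(\mathbb{R})\otimes H$, normed by $|f|_{\varrho,1}=|\partial_{0,\varrho}f|_{\varrho,0}$. $H_{\varrho,-1}(\mathbb{R})\otimes H$ is the dual of $H_{-\varrho,1}(\mathbb{R})\otimes H$ (norm $|\cdot|_{\varrho,-1}$), containing $H_{\varrho,0}(\mathbb{R})\otimes H$ via $f\mapsto(\psi\mapsto\int\langle f(t),\psi(t)\rangle_Hdt)$,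 and $\partial_{0,\varrho}$ extends to a unitary operator from $H_{\varrho,0}(\mathbb{R})\otimes H$ onto $H_{\varrho,-1}(\mathbb{R})\otimes H$. $|F|_{\mathrm{Lip}}$ denotes the best Lipschitz constant of $F$. *)

theory Defs
  imports "HOL-Analysis.Analysis"
begin

text \<open>Weighted space H_{rho,0}(R) (x) H: strongly measurable (Borel measurable and
  essentially separably valued) functions with finite weighted L2 norm.\<close>
definition wL2 :: "real \<Rightarrow> (real \<Rightarrow> 'h::real_inner) set" where
  "wL2 \<rho> = {f. f \<in> borel_measurable lborel
              \<and> (\<exists>D. countable D \<and> (AE t in lborel. f t \<in> closure D))
              \<and> integrable lborel (\<lambda>t. (norm (f t))\<^sup>2 * exp (-2 * \<rho> * t))}"

definition wnorm :: "real \<Rightarrow> (real \<Rightarrow> 'h::real_inner) \<Rightarrow> real" where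
  "wnorm \<rho> f = sqrt (\<integral>t. (norm (f t))\<^sup>2 * exp (-2 * \<rho> * t) \<partial>lborel)"

text \<open>Test functions C_c^infinity(R): eta with derivative sequence Dk, Dk 0 = eta,
  Dk (Suc n) the derivative of Dk n, and eta has compact support.\<close>
definition test_fun :: "(real \<Rightarrow> real) \<Rightarrow> (nat \<Rightarrow> real \<Rightarrow> real) \<Rightarrow> bool" where
  "test_fun \<eta> Dk \<longleftrightarrow> Dk 0 = \<eta>
     \<and> (\<forall>n t. (Dk n has_real_derivative Dk (Suc n) t) (at t))
     \<and> (\<exists>R. \<forall>t. \<bar>t\<bar> > R \<longrightarrow> \<eta> t = 0)"

definition weak_deriv :: "(real \<Rightarrow> 'h::real_inner) \<Rightarrow> (real \<Rightarrow> 'h) \<Rightarrow> bool" where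
  "weak_deriv \<psi> \<psi>' \<longleftrightarrow> (\<forall>\<eta> Dk h. test_fun \<eta> Dk \<longrightarrow>
      (\<integral>t. inner (\<psi> t) h * Dk 1 t \<partial>lborel) = - (\<integral>t. inner (\<psi>' t) h * \<eta> t \<partial>lborel))"

text \<open>H_{rho,1}(R) (x) H as pairs (psi, derivative of psi); its norm is wnorm rho psi'.\<close>
definition wH1 :: "real \<Rightarrow> ((real \<Rightarrow> 'h::real_inner) \<times> (real \<Rightarrow> 'h)) set" where
  "wH1 \<rho> = {(\<psi>, \<psi>'). \<psi> \<in> wL2 \<rho> \<and> \<psi>' \<in> wL2 \<rho> \<and> weak_deriv \<psi> \<psi>'}"

text \<open>H_{rho,-1}(R) (x) H: continuous linear functionals on H_{-rho,1}(R) (x) H.\<close>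
definition wHm1 :: "real \<Rightarrow> ((real \<Rightarrow> 'h::real_inner) \<Rightarrow> real) set" where
  "wHm1 \<rho> = {\<phi>. (\<forall>(\<psi>1, \<psi>1') \<in> wH1 (-\<rho>). \<forall>(\<psi>2, \<psi>2') \<in> wH1 (-\<rho>). \<forall>a b.
                   \<phi> (\<lambda>t. a *\<^sub>R \<psi>1 t + b *\<^sub>R \<psi>2 t) = a * \<phi> \<psi>1 + b * \<phi> \<psi>2)
              \<and> (\<exists>C. \<forall>(\<psi>, \<psi>') \<in> wH1 (-\<rho>). \<bar>\<phi> \<psi>\<bar> \<le> C * wnorm (-\<rho>) \<psi>')}"

definition dnorm :: "real \<Rightarrow> ((real \<Rightarrow> 'h::real_inner) \<Rightarrow> real) \<Rightarrow> real" where
  "dnorm \<rho> \<phi> = Sup {\<bar>\<phi> \<psi>\<bar> | \<psi> \<psi>'. (\<psi>, \<psi>') \<in> wH1 (-\<rho>) \<and> wnorm (-\<rho>) \<psi>' \<le> 1}"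

text \<open>The extension of the time derivative: for u in H_{rho,0}, the element
  partial_{0,rho} u of H_{rho,-1} is psi |-> - int <u, psi'>. The predicate says
  partial_{0,rho} u = Phi in H_{rho,-1}.\<close>
definition deriv_eq :: "real \<Rightarrow> (real \<Rightarrow> 'h::real_inner) \<Rightarrow> ((real \<Rightarrow> 'h) \<Rightarrow> real) \<Rightarrow> bool" where
  "deriv_eq \<rho> u \<Phi> \<longleftrightarrow> (\<forall>(\<psi>, \<psi>') \<in> wH1 (-\<rho>).
      \<Phi> \<psi> = - (\<integral>t. inner (u t) (\<psi>' t) \<partial>lborel))"

definition lip_bound :: "real \<Rightarrow> ((real \<Rightarrow> 'h::real_inner) \<Rightarrow> ((real \<Rightarrow> 'h) \<Rightarrow> real)) \<Rightarrow> real \<Rightarrow> bool" where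
  "lip_bound \<rho> F L \<longleftrightarrow> (\<forall>x \<in> wL2 \<rho>. \<forall>y \<in> wL2 \<rho>.
      dnorm \<rho> (\<lambda>\<psi>. F x \<psi> - F y \<psi>) \<le> L * wnorm \<rho> (\<lambda>t. x t - y t))"

definition lip_const :: "real \<Rightarrow> ((real \<Rightarrow> 'h::real_inner) \<Rightarrow> ((real \<Rightarrow> 'h) \<Rightarrow> real)) \<Rightarrow> real" where
  "lip_const \<rho> F = Inf {L. L \<ge> 0 \<and> lip_bound \<rho> F L}"

end

theory Submission
  imports Defs
begin


lemma meas_simple_comb:
  fixes f :: "'a \<Rightarrow> 'b::topological_space" and s :: "'a \<Rightarrow> 'c"
    and H :: "'b \<Rightarrow> 'c \<Rightarrow> 'd::topological_space"
  assumes f: "f \<in> borel_measurable M" and s: "simple_function M s"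
    and H: "\<And>v. continuous_on UNIV (\<lambda>x. H x v)"
  shows "(\<lambda>t. H (f t) (s t)) \<in> borel_measurable M"
proof (rule borel_measurableI)
  fix S :: "'d set" assume S: "open S"
  have eq: "(\<lambda>t. H (f t) (s t)) -` S \<inter> space M =
     (\<Union>v\<in>s ` space M. (s -` {v} \<inter> space M) \<inter> ((\<lambda>t. H (f t) v) -` S \<inter> space M))"
    by auto
  have "(\<lambda>t. H (f t) v) \<in> borel_measurable M" for v
    by (rule borel_measurable_continuous_on[OF H f])
  hence "(\<lambda>t. H (f t) v) -` S \<inter> space M \<in> sets M" for v
    using S by (simp add: measurable_sets)
  thus "(\<lambda>t. H (f t) (s t)) -` S \<inter> space M \<in> sets M"
    unfolding eq using s[THEN simple_functionD(1)] s[THEN simple_functionD(2)]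
    by (intro sets.finite_UN) auto
qed

definition Phi :: "(real \<Rightarrow> real) \<Rightarrow> real \<Rightarrow> real" where
  "Phi g t = - (\<integral>x. indicator {t..} x * g x \<partial>lborel)"

lemma integrable_bdd_supp:
  fixes g :: "real \<Rightarrow> real"
  assumes g: "g \<in> borel_measurable lborel" and B: "\<And>t. \<bar>g t\<bar> \<le> B"
    and n: "\<And>t. \<bar>t\<bar> > n \<Longrightarrow> g t = 0"
  shows "integrable lborel g"
proof (rule Bochner_Integration.integrable_bound)
  show "integrable lborel (\<lambda>x. indicator {-n..n} x *\<^sub>R B)"
    by (intro integrable_indicator) (auto simp: emeasure_lborel_Icc_eq)
  show "AE x in lborel. norm (g x) \<le> norm (indicator {-n..n} x *\<^sub>R B)"
  proof (rule AE_I2)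
    fix x show "norm (g x) \<le> norm (indicator {-n..n} x *\<^sub>R B)"
      using B[of x] n[of x] by (cases "x \<in> {-n..n}") (auto simp: abs_le_iff)
  qed
qed (rule g)

lemma integrable_ind_mult:
  fixes g :: "real \<Rightarrow> real"
  assumes "integrable lborel g" "A \<in> sets borel"
  shows "integrable lborel (\<lambda>x. indicator A x * g x)"
  using integrable_real_mult_indicator[of A lborel g] assms by (simp add: mult.commute)

lemma Phi_lip_le:
  fixes g :: "real \<Rightarrow> real"
  assumes g: "g \<in> borel_measurable lborel" and B: "\<And>t. \<bar>g t\<bar> \<le> B"
    and n: "\<And>t. \<bar>t\<bar> > n \<Longrightarrow> g t = 0" and tt: "t \<le> t'"
  shows "\<bar>Phi g t - Phi g t'\<bar> \<le> B * (t' - t)"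
proof -
  have ig: "integrable lborel g" by (rule integrable_bdd_supp[OF g B n])
  have i1: "integrable lborel (\<lambda>x. indicator {t..} x * g x)"
    and i2: "integrable lborel (\<lambda>x. indicator {t'..} x * g x)"
    by (auto intro!: integrable_ind_mult ig)
  have "Phi g t - Phi g t' = (\<integral>x. indicator {t'..} x * g x - indicator {t..} x * g x \<partial>lborel)"
    unfolding Phi_def using i1 i2 by (simp add: Bochner_Integration.integral_diff)
  hence "\<bar>Phi g t - Phi g t'\<bar> \<le> (\<integral>x. norm (indicator {t'..} x * g x - indicator {t..} x * g x) \<partial>lborel)"
    using integral_norm_bound[of lborel "\<lambda>x. indicator {t'..} x * g x - indicator {t..} x * g x"]
    by simp
  also have "\<dots> \<le> (\<integral>x. indicator {t..t'} x * B \<partial>lborel)"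
  proof (rule integral_mono)
    show "integrable lborel (\<lambda>x. norm (indicator {t'..} x * g x - indicator {t..} x * g x))"
      using i1 i2 by auto
    show "integrable lborel (\<lambda>x. indicator {t..t'} x * B)"
      using integrable_indicator[of "{t..t'}" lborel B] by (simp add: emeasure_lborel_Icc_eq)
    fix x show "norm (indicator {t'..} x * g x - indicator {t..} x * g x) \<le> indicator {t..t'} x * B"
      using B[of x] tt by (auto simp: indicator_def)
  qed
  also have "\<dots> = B * (t' - t)" using tt by simp
  finally show ?thesis .
qed

lemma Phi_lip:
  fixes g :: "real \<Rightarrow> real"
  assumes g: "g \<in> borel_measurable lborel" and B: "\<And>t. \<bar>g t\<bar> \<le> B"
    and n: "\<And>t. \<bar>t\<bar> > n \<Longrightarrow> g t = 0"
  shows "\<bar>Phi g t - Phi g t'\<bar> \<le> B * \<bar>t - t'\<bar>"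
proof (cases "t \<le> t'")
  case True thus ?thesis using Phi_lip_le[OF g B n True] by simp
next
  case False thus ?thesis using Phi_lip_le[OF g B n, where t=t' and t'=t] by (simp add: abs_minus_commute)
qed

lemma Phi_cont:
  fixes g :: "real \<Rightarrow> real"
  assumes g: "g \<in> borel_measurable lborel" and B: "\<And>t. \<bar>g t\<bar> \<le> B"
    and n: "\<And>t. \<bar>t\<bar> > n \<Longrightarrow> g t = 0"
  shows "continuous_on UNIV (Phi g)"
proof -
  have B0: "0 \<le> B" using B[of 0] by simp
  have "B-lipschitz_on UNIV (Phi g)"
    using Phi_lip[OF g B n] B0 by (intro lipschitz_onI) (auto simp: dist_real_def)
  thus ?thesis by (rule lipschitz_on_continuous_on)
qed

lemma Phi_bound:
  fixes g :: "real \<Rightarrow> real"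
  assumes g: "g \<in> borel_measurable lborel" and B: "\<And>t. \<bar>g t\<bar> \<le> B"
    and n: "\<And>t. \<bar>t\<bar> > n \<Longrightarrow> g t = 0"
  shows "\<bar>Phi g t\<bar> \<le> B * (2 * \<bar>n\<bar> + 1)"
proof -
  have ig: "integrable lborel g" by (rule integrable_bdd_supp[OF g B n])
  have i1: "integrable lborel (\<lambda>x. indicator {t..} x * g x)"
    by (auto intro!: integrable_ind_mult ig)
  have "\<bar>Phi g t\<bar> \<le> (\<integral>x. norm (indicator {t..} x * g x) \<partial>lborel)"
    unfolding Phi_def using integral_norm_bound[of lborel "\<lambda>x. indicator {t..} x * g x"] by simp
  also have "\<dots> \<le> (\<integral>x. indicator {-\<bar>n\<bar>..\<bar>n\<bar>} x * B \<partial>lborel)"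
  proof (rule integral_mono)
    show "integrable lborel (\<lambda>x. norm (indicator {t..} x * g x))" using i1 by auto
    show "integrable lborel (\<lambda>x. indicator {-\<bar>n\<bar>..\<bar>n\<bar>} x * B)"
      using integrable_indicator[of "{-\<bar>n\<bar>..\<bar>n\<bar>}" lborel B] by (simp add: emeasure_lborel_Icc_eq)
    fix x show "norm (indicator {t..} x * g x) \<le> indicator {-\<bar>n\<bar>..\<bar>n\<bar>} x * B"
      using B[of x] n[of x] B[of 0] by (auto simp: indicator_def abs_le_iff)
  qed
  also have "\<dots> = B * (2 * \<bar>n\<bar>)" by simp
  also have "\<dots> \<le> B * (2 * \<bar>n\<bar> + 1)" using B[of 0] by (intro mult_left_mono) auto
  finally show ?thesis .
qed

lemma Phi_zero:
  fixes g :: "real \<Rightarrow> real"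
  assumes n: "\<And>t. \<bar>t\<bar> > n \<Longrightarrow> g t = 0" and t: "t > \<bar>n\<bar>"
  shows "Phi g t = 0"
proof -
  have "(\<lambda>x. indicator {t..} x * g x) = (\<lambda>x. 0)"
    using n t by (auto simp: fun_eq_iff indicator_def)
  thus ?thesis by (simp add: Phi_def)
qed

lemma tf_deriv:
  assumes "test_fun \<eta> Dk"
  shows "(Dk k has_real_derivative Dk (Suc k) t) (at t)"
  using assms unfolding test_fun_def by blast

lemma tf_cont:
  assumes "test_fun \<eta> Dk"
  shows "continuous_on UNIV (Dk k)"
  proof (intro continuous_at_imp_continuous_on ballI)
  fix x show "isCont (Dk k) x" using tf_deriv[OF assms, of k x] by (rule DERIV_isCont)
qed

lemma tf_supp:
  assumes tf: "test_fun \<eta> Dk"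
  obtains R where "R \<ge> 0" "\<And>t. \<bar>t\<bar> > R \<Longrightarrow> \<eta> t = 0" "\<And>t. \<bar>t\<bar> > R \<Longrightarrow> Dk 1 t = 0"
proof -
  from tf obtain R0 where R0: "\<And>t. \<bar>t\<bar> > R0 \<Longrightarrow> \<eta> t = 0" unfolding test_fun_def by blast
  define R where "R = \<bar>R0\<bar>"
  have R: "\<And>t. \<bar>t\<bar> > R \<Longrightarrow> \<eta> t = 0" using R0 unfolding R_def by force
  have D0: "Dk 0 = \<eta>" using tf unfolding test_fun_def by blast
  have "Dk 1 t = 0" if t: "\<bar>t\<bar> > R" for t
  proof (rule DERIV_local_const)
    show "(\<eta> has_real_derivative Dk 1 t) (at t)" using tf_deriv[OF tf, of 0 t] D0 by simp
    show "0 < \<bar>t\<bar> - R" using t by simp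
    show "\<forall>y. \<bar>t - y\<bar> < \<bar>t\<bar> - R \<longrightarrow> \<eta> t = \<eta> y"
    proof (intro allI impI)
      fix y assume "\<bar>t - y\<bar> < \<bar>t\<bar> - R"
      hence "\<bar>y\<bar> > R" by arith
      thus "\<eta> t = \<eta> y" using R t by simp
    qed
  qed
  thus ?thesis using that[of R] R unfolding R_def by auto
qed

lemma tf_bound:
  assumes tf: "test_fun \<eta> Dk"
  obtains C where "\<And>t. \<bar>Dk 1 t\<bar> \<le> C"
proof -
  obtain R where R: "R \<ge> 0" "\<And>t. \<bar>t\<bar> > R \<Longrightarrow> Dk 1 t = 0" using tf_supp[OF tf] by metis
  have "compact (Dk 1 ` {-R..R})"
    using tf_cont[OF tf, of 1] by (intro compact_continuous_image) (auto intro: continuous_on_subset)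
  then obtain a where a: "\<And>x. x \<in> Dk 1 ` {-R..R} \<Longrightarrow> norm x \<le> a"
    using compact_imp_bounded bounded_iff by metis
  have "\<bar>Dk 1 t\<bar> \<le> \<bar>a\<bar>" for t
  proof (cases "\<bar>t\<bar> > R")
    case True thus ?thesis using R by simp
  next
    case False hence "t \<in> {-R..R}" by auto
    hence "Dk 1 t \<in> Dk 1 ` {-R..R}" by (rule imageI)
    thus ?thesis using a[of "Dk 1 t"] by auto
  qed
  thus ?thesis using that by blast
qed

lemma tf_FTC:
  assumes tf: "test_fun \<eta> Dk"
  shows "(\<integral>t. indicator {..x} t * Dk 1 t \<partial>lborel) = \<eta> x"
proof -
  obtain R where R: "R \<ge> 0" "\<And>t. \<bar>t\<bar> > R \<Longrightarrow> \<eta> t = 0" "\<And>t. \<bar>t\<bar> > R \<Longrightarrow> Dk 1 t = 0"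
    using tf_supp[OF tf] by metis
  define a where "a = - (R + \<bar>x\<bar> + 1)"
  have ax: "a \<le> x" unfolding a_def using R(1) by linarith
  have D0: "Dk 0 = \<eta>" using tf unfolding test_fun_def by blast
  have "(\<lambda>t. indicator {..x} t * Dk 1 t) = (\<lambda>t. indicator {a..x} t *\<^sub>R Dk 1 t)"
  proof
    fix t show "indicator {..x} t * Dk 1 t = indicator {a..x} t *\<^sub>R Dk 1 t"
    proof (cases "t < a")
      case True hence "\<bar>t\<bar> > R" unfolding a_def using R(1) by linarith
      thus ?thesis using R(3) by simp
    next
      case False thus ?thesis by (simp add: indicator_def)
    qed
  qed
  hence "(\<integral>t. indicator {..x} t * Dk 1 t \<partial>lborel) = (\<integral>t. indicator {a..x} t *\<^sub>R Dk 1 t \<partial>lborel)"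
    by simp
  also have "\<dots> = \<eta> x - \<eta> a"
  proof (rule integral_FTC_atLeastAtMost[OF ax])
    fix y show "(\<eta> has_vector_derivative Dk 1 y) (at y within {a..x})"
      using tf_deriv[OF tf, of 0 y] D0
      by (simp add: has_real_derivative_iff_has_vector_derivative[symmetric] has_field_derivative_at_within)
    show "continuous_on {a..x} (Dk 1)" using tf_cont[OF tf, of 1] by (rule continuous_on_subset) auto
  qed
  also have "\<eta> a = 0" using R(2)[of a] unfolding a_def using R(1) by (simp add: abs_if)
  finally show ?thesis by simp
qed

lemma Phi_meas: 
  fixes g :: "real \<Rightarrow> real"
  assumes g: "g \<in> borel_measurable lborel" and B: "\<And>t. \<bar>g t\<bar> \<le> B"
    and n: "\<And>t. \<bar>t\<bar> > n \<Longrightarrow> g t = 0"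
  shows "Phi g \<in> borel_measurable lborel"
  using borel_measurable_continuous_onI[OF Phi_cont[OF g B n]] by simp

lemma Phi_weak:
  fixes g :: "real \<Rightarrow> real"
  assumes g: "g \<in> borel_measurable lborel" and B: "\<And>t. \<bar>g t\<bar> \<le> B"
    and n: "\<And>t. \<bar>t\<bar> > n \<Longrightarrow> g t = 0" and tf: "test_fun \<eta> Dk"
  shows "integrable lborel (\<lambda>t. Phi g t * Dk 1 t)"
    and "integrable lborel (\<lambda>t. g t * \<eta> t)"
    and "(\<integral>t. Phi g t * Dk 1 t \<partial>lborel) = - (\<integral>t. g t * \<eta> t \<partial>lborel)"
proof -
  obtain R where R: "R \<ge> 0" "\<And>t. \<bar>t\<bar> > R \<Longrightarrow> \<eta> t = 0" "\<And>t. \<bar>t\<bar> > R \<Longrightarrow> Dk 1 t = 0"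
    using tf_supp[OF tf] by metis
  obtain C where C: "\<And>t. \<bar>Dk 1 t\<bar> \<le> C" using tf_bound[OF tf] by metis
  have D0: "Dk 0 = \<eta>" using tf unfolding test_fun_def by blast
  have B0: "0 \<le> B" using B[of 0] by simp
  have C0: "0 \<le> C" using C[of 0] by simp
  have D1m[measurable]: "Dk 1 \<in> borel_measurable lborel"
    using borel_measurable_continuous_onI[OF tf_cont[OF tf, of 1]] by simp
  have etam[measurable]: "\<eta> \<in> borel_measurable lborel"
    using borel_measurable_continuous_onI[OF tf_cont[OF tf, of 0]] D0 by simp
  have gm[measurable]: "g \<in> borel_measurable borel" using g by simp
  have Pm[measurable]: "Phi g \<in> borel_measurable lborel" by (rule Phi_meas[OF g B n])
  have ig: "integrable lborel g" by (rule integrable_bdd_supp[OF g B n])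
  show i1: "integrable lborel (\<lambda>t. Phi g t * Dk 1 t)"
  proof (rule Bochner_Integration.integrable_bound)
    show "integrable lborel (\<lambda>x. indicator {-R..R} x *\<^sub>R (B * (2 * \<bar>n\<bar> + 1) * C))"
      by (intro integrable_indicator) (auto simp: emeasure_lborel_Icc_eq)
    show "AE x in lborel. norm (Phi g x * Dk 1 x) \<le> norm (indicator {-R..R} x *\<^sub>R (B * (2 * \<bar>n\<bar> + 1) * C))"
    proof (rule AE_I2)
      fix x
      have "\<bar>Phi g x * Dk 1 x\<bar> \<le> B * (2 * \<bar>n\<bar> + 1) * C"
        unfolding abs_mult using B0 by (intro mult_mono Phi_bound[OF g B n] C) auto
      thus "norm (Phi g x * Dk 1 x) \<le> norm (indicator {-R..R} x *\<^sub>R (B * (2 * \<bar>n\<bar> + 1) * C))"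
      proof (cases "x \<in> {-R..R}")
        case False hence "\<bar>x\<bar> > R" by auto
        thus ?thesis using R(3)[of x] by simp
      qed (use \<open>\<bar>Phi g x * Dk 1 x\<bar> \<le> _\<close> in auto)
    qed
  qed (use Pm D1m in \<open>simp add: borel_measurable_times\<close>)
    obtain E where E: "\<And>t. \<bar>\<eta> t\<bar> \<le> E"
  proof -
    have "compact (\<eta> ` {-R..R})"
      using tf_cont[OF tf, of 0] D0 by (intro compact_continuous_image) (auto intro: continuous_on_subset)
    then obtain a where a: "\<And>x. x \<in> \<eta> ` {-R..R} \<Longrightarrow> norm x \<le> a"
      using compact_imp_bounded bounded_iff by metis
    have "\<bar>\<eta> t\<bar> \<le> \<bar>a\<bar>" for t
    proof (cases "\<bar>t\<bar> > R")
      case True thus ?thesis using R by simp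
    next
      case False hence "t \<in> {-R..R}" by auto
      hence "\<eta> t \<in> \<eta> ` {-R..R}" by (rule imageI)
      thus ?thesis using a[of "\<eta> t"] by auto
    qed
    thus ?thesis using that by blast
  qed
  have ge: "integrable lborel (\<lambda>t. g t * \<eta> t)"
  proof (rule Bochner_Integration.integrable_bound)
    show "integrable lborel (\<lambda>x. g x * E)" using ig by simp
    show "AE x in lborel. norm (g x * \<eta> x) \<le> norm (g x * E)"
    proof (rule AE_I2)
      fix x have "\<bar>\<eta> x\<bar> \<le> \<bar>E\<bar>" using E[of x] by simp
      thus "norm (g x * \<eta> x) \<le> norm (g x * E)" by (simp add: abs_mult mult_left_mono)
    qed
  qed simp
  thus "integrable lborel (\<lambda>t. g t * \<eta> t)" .
  define f where "f = (\<lambda>t x. indicator {t..} x * g x * Dk 1 t)"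
  have D1b[measurable]: "Dk 1 \<in> borel_measurable borel" using D1m by simp
  have fmb: "case_prod f \<in> borel_measurable (borel \<Otimes>\<^sub>M borel)"
  proof -
    have gs: "(\<lambda>p::real\<times>real. g (snd p)) \<in> borel_measurable (borel \<Otimes>\<^sub>M borel)"
      by (rule measurable_compose[OF measurable_snd gm])
    have ds: "(\<lambda>p::real\<times>real. Dk 1 (fst p)) \<in> borel_measurable (borel \<Otimes>\<^sub>M borel)"
      by (rule measurable_compose[OF measurable_fst D1b])
    have "closed {p::real\<times>real. fst p \<le> snd p}"
      by (intro closed_Collect_le continuous_intros)
    hence "{p::real\<times>real. fst p \<le> snd p} \<in> sets (borel \<Otimes>\<^sub>M borel)"
      unfolding borel_prod by (rule borel_closed)
    hence isf: "(\<lambda>p::real\<times>real. indicator {p. fst p \<le> snd p} p :: real) \<in> borel_measurable (borel \<Otimes>\<^sub>M borel)"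
      by (rule borel_measurable_indicator)
    have "case_prod f = (\<lambda>p. indicator {p. fst p \<le> snd p} p * g (snd p) * Dk 1 (fst p))"
      unfolding f_def by (auto simp: fun_eq_iff indicator_def)
    thus ?thesis using gs ds isf by (simp add: borel_measurable_times)
  qed
  have "sets (lborel \<Otimes>\<^sub>M lborel) = sets (borel \<Otimes>\<^sub>M borel)"
    by (intro sets_pair_measure_cong) auto
  hence fm: "case_prod f \<in> borel_measurable (lborel \<Otimes>\<^sub>M lborel)"
    using fmb measurable_cong_sets by blast
  have fint: "integrable (lborel \<Otimes>\<^sub>M lborel) (case_prod f)"
  proof (rule Bochner_Integration.integrable_bound)
    show "integrable (lborel \<Otimes>\<^sub>M lborel) (\<lambda>p. indicator ({-R..R} \<times> {-\<bar>n\<bar>..\<bar>n\<bar>}) p *\<^sub>R (B * C))"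
    proof (intro integrable_indicator)
      have "emeasure (lborel \<Otimes>\<^sub>M lborel) ({-R..R} \<times> {-\<bar>n\<bar>..\<bar>n\<bar>}) = emeasure lborel {-R..R} * emeasure lborel {-\<bar>n\<bar>..\<bar>n\<bar>}"
        by (rule lborel.emeasure_pair_measure_Times) auto
      thus "emeasure (lborel \<Otimes>\<^sub>M lborel) ({-R..R} \<times> {-\<bar>n\<bar>..\<bar>n\<bar>}) < \<infinity>"
        by (simp add: emeasure_lborel_Icc_eq ennreal_mult_less_top)
      show "{-R..R} \<times> {-\<bar>n\<bar>..\<bar>n\<bar>} \<in> sets (lborel \<Otimes>\<^sub>M lborel)" by (intro pair_measureI) auto
    qed
    show "AE p in lborel \<Otimes>\<^sub>M lborel. norm (case_prod f p) \<le> norm (indicator ({-R..R} \<times> {-\<bar>n\<bar>..\<bar>n\<bar>}) p *\<^sub>R (B * C))"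
    proof (rule AE_I2)
      fix p :: "real \<times> real"
      obtain t x where p: "p = (t, x)" by (cases p)
      have "\<bar>f t x\<bar> \<le> B * C" unfolding f_def abs_mult
        using B[of x] C[of t] B0 C0 by (auto simp: indicator_def intro: mult_mono)
      moreover have "f t x = 0" if "p \<notin> {-R..R} \<times> {-\<bar>n\<bar>..\<bar>n\<bar>}"
      proof -
        from that p have "\<bar>t\<bar> > R \<or> \<bar>x\<bar> > \<bar>n\<bar>" by auto
        thus ?thesis unfolding f_def using R(3)[of t] n[of x] by auto
      qed
      ultimately show "norm (case_prod f p) \<le> norm (indicator ({-R..R} \<times> {-\<bar>n\<bar>..\<bar>n\<bar>}) p *\<^sub>R (B * C))"
        using p B0 C0 by (cases "p \<in> {-R..R} \<times> {-\<bar>n\<bar>..\<bar>n\<bar>}") auto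
    qed
  qed (rule fm)
  have "(\<integral>x. (\<integral>t. f t x \<partial>lborel) \<partial>lborel) = (\<integral>t. (\<integral>x. f t x \<partial>lborel) \<partial>lborel)"
    by (rule lborel_pair.Fubini_integral[OF fint])
  moreover have "(\<integral>t. f t x \<partial>lborel) = g x * \<eta> x" for x
  proof -
    have "(\<lambda>t. f t x) = (\<lambda>t. (indicator {..x} t * Dk 1 t) * g x)"
      unfolding f_def by (auto simp: fun_eq_iff indicator_def)
    thus ?thesis using tf_FTC[OF tf, of x] by simp
  qed
  moreover have "(\<integral>x. f t x \<partial>lborel) = - Phi g t * Dk 1 t" for t
  proof -
    have "(\<lambda>x. f t x) = (\<lambda>x. (indicator {t..} x * g x) * Dk 1 t)"
      unfolding f_def by (auto simp: fun_eq_iff)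
    thus ?thesis unfolding Phi_def by simp
  qed
  ultimately have "(\<integral>x. g x * \<eta> x \<partial>lborel) = (\<integral>t. - Phi g t * Dk 1 t \<partial>lborel)" by simp
  thus "(\<integral>t. Phi g t * Dk 1 t \<partial>lborel) = - (\<integral>t. g t * \<eta> t \<partial>lborel)" by simp
qed



lemma closure_cont_image:
  assumes "continuous_on UNIV H" "x \<in> closure D"
  shows "H x \<in> closure (H ` D)"
proof -
  have "H ` closure D \<subseteq> closure (H ` D)"
  proof (rule image_closure_subset)
    show "continuous_on (closure D) H" using assms(1) by (rule continuous_on_subset) auto
    show "H ` D \<subseteq> closure (H ` D)" by (rule closure_subset)
  qed auto
  thus ?thesis using assms(2) by auto
qed

lemma wL2_scale:
  fixes f :: "real \<Rightarrow> 'h::real_inner"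
  assumes "f \<in> wL2 r"
  shows "(\<lambda>t. c *\<^sub>R f t) \<in> wL2 r"
proof -
  from assms have fm: "f \<in> borel_measurable lborel"
    and D: "\<exists>D. countable D \<and> (AE t in lborel. f t \<in> closure D)"
    and fi: "integrable lborel (\<lambda>t. (norm (f t))\<^sup>2 * exp (-2 * r * t))"
    unfolding wL2_def by auto
  have cH: "continuous_on UNIV (\<lambda>x::'h. c *\<^sub>R x)" by (intro continuous_intros)
  have m: "(\<lambda>t. c *\<^sub>R f t) \<in> borel_measurable lborel"
    by (rule borel_measurable_continuous_on[OF cH fm])
  from D obtain D where D: "countable D" "AE t in lborel. f t \<in> closure D" by blast
  have "AE t in lborel. c *\<^sub>R f t \<in> closure ((\<lambda>x. c *\<^sub>R x) ` D)"
    using D(2) by eventually_elim (rule closure_cont_image[OF cH])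
  moreover have "countable ((\<lambda>x. c *\<^sub>R x) ` D)" using D(1) by simp
  ultimately have s: "\<exists>D. countable D \<and> (AE t in lborel. c *\<^sub>R f t \<in> closure D)" by blast
  have "integrable lborel (\<lambda>t. c\<^sup>2 * ((norm (f t))\<^sup>2 * exp (-2 * r * t)))"
    using fi by simp
  hence i: "integrable lborel (\<lambda>t. (norm (c *\<^sub>R f t))\<^sup>2 * exp (-2 * r * t))"
    by (simp add: power_mult_distrib mult.assoc)
  show ?thesis unfolding wL2_def using m s i by blast
qed

lemma wnorm_scale:
  fixes f :: "real \<Rightarrow> 'h::real_inner"
  shows "wnorm r (\<lambda>t. c *\<^sub>R f t) = \<bar>c\<bar> * wnorm r f"
proof -
  have "(\<lambda>t. (norm (c *\<^sub>R f t))\<^sup>2 * exp (-2 * r * t)) = (\<lambda>t. c\<^sup>2 * ((norm (f t))\<^sup>2 * exp (-2 * r * t)))"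
    by (simp add: power_mult_distrib fun_eq_iff)
  thus ?thesis unfolding wnorm_def by (simp add: real_sqrt_mult)
qed

lemma wnorm_nonneg: "wnorm r f \<ge> 0"
  unfolding wnorm_def by simp

lemma weak_deriv_scale:
  assumes "weak_deriv \<psi> \<psi>'"
  shows "weak_deriv (\<lambda>t. c *\<^sub>R \<psi> t) (\<lambda>t. c *\<^sub>R \<psi>' t)"
  using assms unfolding weak_deriv_def by (simp add: mult.assoc)

lemma wH1_scale:
  assumes "(\<psi>, \<psi>') \<in> wH1 r"
  shows "((\<lambda>t. c *\<^sub>R \<psi> t), (\<lambda>t. c *\<^sub>R \<psi>' t)) \<in> wH1 r"
  using assms unfolding wH1_def by (auto intro: wL2_scale weak_deriv_scale)

lemma zero_wL2: "(\<lambda>t. 0 :: 'h::real_inner) \<in> wL2 r"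
proof -
  have "\<exists>D. countable D \<and> (AE t in lborel. (0::'h) \<in> closure D)"
    by (intro exI[of _ "{0}"]) auto
  thus ?thesis unfolding wL2_def by auto
qed

lemma zero_wH1: "((\<lambda>t. 0 :: 'h::real_inner), (\<lambda>t. 0)) \<in> wH1 r"
  unfolding wH1_def weak_deriv_def using zero_wL2 by auto

lemma wnorm_zero: "wnorm r (\<lambda>t. 0 :: 'h::real_inner) = 0"
  unfolding wnorm_def by simp

lemma wHm1_scale:
  fixes A B :: "(real \<Rightarrow> 'h::real_inner) \<Rightarrow> real"
  assumes A: "A \<in> wHm1 \<rho>" and p: "(\<psi>, \<psi>') \<in> wH1 (-\<rho>)"
  shows "A (\<lambda>t. c *\<^sub>R \<psi> t) = c * A \<psi>"
proof -
  from A have "\<forall>(\<psi>1, \<psi>1') \<in> wH1 (-\<rho>). \<forall>(\<psi>2, \<psi>2') \<in> wH1 (-\<rho>). \<forall>a b.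
                   A (\<lambda>t. a *\<^sub>R \<psi>1 t + b *\<^sub>R \<psi>2 t) = a * A \<psi>1 + b * A \<psi>2"
    unfolding wHm1_def by blast
  hence "A (\<lambda>t. c *\<^sub>R \<psi> t + 0 *\<^sub>R \<psi> t) = c * A \<psi> + 0 * A \<psi>" using p by fast
  thus ?thesis by simp
qed

lemma wHm1_bound:
  fixes A B :: "(real \<Rightarrow> 'h::real_inner) \<Rightarrow> real"
  assumes A: "A \<in> wHm1 \<rho>"
  obtains C where "C \<ge> 0" "\<And>\<psi> \<psi>'. (\<psi>, \<psi>') \<in> wH1 (-\<rho>) \<Longrightarrow> \<bar>A \<psi>\<bar> \<le> C * wnorm (-\<rho>) \<psi>'"
proof -
  from A obtain C where C: "\<forall>(\<psi>, \<psi>') \<in> wH1 (-\<rho>). \<bar>A \<psi>\<bar> \<le> C * wnorm (-\<rho>) \<psi>'"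
    unfolding wHm1_def by blast
  have "\<bar>A \<psi>\<bar> \<le> \<bar>C\<bar> * wnorm (-\<rho>) \<psi>'" if "(\<psi>, \<psi>') \<in> wH1 (-\<rho>)" for \<psi> \<psi>'
  proof -
    have "\<bar>A \<psi>\<bar> \<le> C * wnorm (-\<rho>) \<psi>'" using C that by fast
    also have "\<dots> \<le> \<bar>C\<bar> * wnorm (-\<rho>) \<psi>'" using wnorm_nonneg by (intro mult_right_mono) auto
    finally show ?thesis .
  qed
  thus ?thesis using that[of "\<bar>C\<bar>"] by auto
qed

lemma dnorm_bdd:
  fixes A B :: "(real \<Rightarrow> 'h::real_inner) \<Rightarrow> real"
  assumes A: "A \<in> wHm1 \<rho>" and B: "B \<in> wHm1 \<rho>"
  shows "bdd_above {\<bar>A \<psi> - B \<psi>\<bar> | \<psi> \<psi>'. (\<psi>, \<psi>') \<in> wH1 (-\<rho>) \<and> wnorm (-\<rho>) \<psi>' \<le> 1}"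
proof -
  obtain CA where CA: "CA \<ge> 0" "\<And>\<psi> \<psi>'. (\<psi>, \<psi>') \<in> wH1 (-\<rho>) \<Longrightarrow> \<bar>A \<psi>\<bar> \<le> CA * wnorm (-\<rho>) \<psi>'"
    using wHm1_bound[OF A] by metis
  obtain CB where CB: "CB \<ge> 0" "\<And>\<psi> \<psi>'. (\<psi>, \<psi>') \<in> wH1 (-\<rho>) \<Longrightarrow> \<bar>B \<psi>\<bar> \<le> CB * wnorm (-\<rho>) \<psi>'"
    using wHm1_bound[OF B] by metis
  show ?thesis
  proof (rule bdd_aboveI, safe)
    fix \<psi> \<psi>' :: "real \<Rightarrow> 'h" assume p: "(\<psi>, \<psi>') \<in> wH1 (-\<rho>)" and w: "wnorm (-\<rho>) \<psi>' \<le> 1"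
    have "\<bar>A \<psi> - B \<psi>\<bar> \<le> CA * wnorm (-\<rho>) \<psi>' + CB * wnorm (-\<rho>) \<psi>'"
      using CA(2)[OF p] CB(2)[OF p] by linarith
    also have "\<dots> \<le> CA * 1 + CB * 1"
      using w CA(1) CB(1) by (intro add_mono mult_left_mono) auto
    finally show "\<bar>A \<psi> - B \<psi>\<bar> \<le> CA + CB" by simp
  qed
qed

lemma dnorm_nonneg:
  fixes A B :: "(real \<Rightarrow> 'h::real_inner) \<Rightarrow> real"
  assumes A: "A \<in> wHm1 \<rho>" and B: "B \<in> wHm1 \<rho>"
  shows "dnorm \<rho> (\<lambda>\<psi>. A \<psi> - B \<psi>) \<ge> 0"
proof -
  have "\<bar>A (\<lambda>t. 0) - B (\<lambda>t. 0)\<bar> \<in> {\<bar>A \<psi> - B \<psi>\<bar> | \<psi> \<psi>'. (\<psi>, \<psi>') \<in> wH1 (-\<rho>) \<and> wnorm (-\<rho>) \<psi>' \<le> 1}"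
  proof -
    have "((\<lambda>t. 0::'h), (\<lambda>t. 0)) \<in> wH1 (-\<rho>)" by (rule zero_wH1)
    moreover have "wnorm (-\<rho>) (\<lambda>t. 0::'h) \<le> 1" by (simp add: wnorm_zero)
    ultimately show ?thesis by blast
  qed
  hence "\<bar>A (\<lambda>t. 0) - B (\<lambda>t. 0)\<bar> \<le> dnorm \<rho> (\<lambda>\<psi>. A \<psi> - B \<psi>)"
    unfolding dnorm_def by (intro cSup_upper dnorm_bdd[OF A B])
  thus ?thesis by linarith
qed

lemma dnorm_bound:
  fixes A B :: "(real \<Rightarrow> 'h::real_inner) \<Rightarrow> real"
  assumes A: "A \<in> wHm1 \<rho>" and B: "B \<in> wHm1 \<rho>" and p: "(\<psi>, \<psi>') \<in> wH1 (-\<rho>)"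
  shows "\<bar>A \<psi> - B \<psi>\<bar> \<le> dnorm \<rho> (\<lambda>\<psi>. A \<psi> - B \<psi>) * wnorm (-\<rho>) \<psi>'"
proof (cases "wnorm (-\<rho>) \<psi>' = 0")
  case True
  obtain CA where CA: "CA \<ge> 0" "\<And>\<psi> \<psi>'. (\<psi>, \<psi>') \<in> wH1 (-\<rho>) \<Longrightarrow> \<bar>A \<psi>\<bar> \<le> CA * wnorm (-\<rho>) \<psi>'"
    using wHm1_bound[OF A] by metis
  obtain CB where CB: "CB \<ge> 0" "\<And>\<psi> \<psi>'. (\<psi>, \<psi>') \<in> wH1 (-\<rho>) \<Longrightarrow> \<bar>B \<psi>\<bar> \<le> CB * wnorm (-\<rho>) \<psi>'"
    using wHm1_bound[OF B] by metis
  show ?thesis using CA(2)[OF p] CB(2)[OF p] True by simp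
next
  case False
  define M where "M = wnorm (-\<rho>) \<psi>'"
  have M: "M > 0" using False wnorm_nonneg[of "-\<rho>" \<psi>'] unfolding M_def by linarith
  have p': "((\<lambda>t. (1/M) *\<^sub>R \<psi> t), (\<lambda>t. (1/M) *\<^sub>R \<psi>' t)) \<in> wH1 (-\<rho>)" by (rule wH1_scale[OF p])
  have w1: "wnorm (-\<rho>) (\<lambda>t. (1/M) *\<^sub>R \<psi>' t) \<le> 1"
    using M unfolding wnorm_scale M_def by simp
  have "\<bar>A (\<lambda>t. (1/M) *\<^sub>R \<psi> t) - B (\<lambda>t. (1/M) *\<^sub>R \<psi> t)\<bar>
        \<in> {\<bar>A \<psi> - B \<psi>\<bar> | \<psi> \<psi>'. (\<psi>, \<psi>') \<in> wH1 (-\<rho>) \<and> wnorm (-\<rho>) \<psi>' \<le> 1}"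
    using p' w1 by blast
  hence "\<bar>A (\<lambda>t. (1/M) *\<^sub>R \<psi> t) - B (\<lambda>t. (1/M) *\<^sub>R \<psi> t)\<bar> \<le> dnorm \<rho> (\<lambda>\<psi>. A \<psi> - B \<psi>)"
    unfolding dnorm_def by (intro cSup_upper dnorm_bdd[OF A B])
  moreover have "\<bar>A (\<lambda>t. (1/M) *\<^sub>R \<psi> t) - B (\<lambda>t. (1/M) *\<^sub>R \<psi> t)\<bar> = \<bar>A \<psi> - B \<psi>\<bar> / M"
    using M by (simp add: wHm1_scale[OF A p] wHm1_scale[OF B p] diff_divide_distrib[symmetric] abs_divide)
  ultimately have "\<bar>A \<psi> - B \<psi>\<bar> / M \<le> dnorm \<rho> (\<lambda>\<psi>. A \<psi> - B \<psi>)" by simp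
  thus ?thesis using M unfolding M_def by (simp add: divide_le_eq mult.commute)
qed



lemma exp_int_neg:
  fixes a c :: real
  assumes c: "c > 0"
  shows "integrable lborel (\<lambda>x. indicator {a..} x * exp (- c * x))"
proof -
  have "(\<lambda>x. exp (- c * x)) absolutely_integrable_on {a..}"
  proof (rule nonnegative_absolutely_integrable_1)
    show "(\<lambda>x. exp (- c * x)) integrable_on {a..}" using integrable_on_exp_minus_to_infinity[OF c, of a] by simp
  qed auto
  hence "integrable lebesgue (\<lambda>x. indicator {a..} x *\<^sub>R exp (- c * x))"
    by (simp add: set_integrable_def)
  moreover have "(\<lambda>x. indicator {a..} x *\<^sub>R exp (- c * x)) \<in> borel_measurable lborel"
    by measurable
  ultimately show ?thesis using integrable_completion by (simp add: integrable_completion)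
qed

lemma exp_int_pos:
  fixes a c :: real
  assumes c: "c > 0"
  shows "integrable lborel (\<lambda>x. indicator {..a} x * exp (c * x))"
proof -
  have "integrable lborel (\<lambda>x. (\<lambda>y. indicator {..a} y * exp (c * y)) (0 + (-1) * x))"
  proof -
    have "(\<lambda>x. (\<lambda>y. indicator {..a} y * exp (c * y)) (0 + (-1) * x)) = (\<lambda>x. indicator {-a..} x * exp (- c * x))"
      by (simp add: fun_eq_iff indicator_def minus_le_iff)
    thus ?thesis using exp_int_neg[OF c, of "-a"] by simp
  qed
  thus ?thesis using lborel_integrable_real_affine_iff[of "-1" "\<lambda>y. indicator {..a} y * exp (c * y)" 0] by simp
qed

lemma build:
  fixes s :: "real \<Rightarrow> 'h::real_inner" and \<rho> n :: real
  assumes \<rho>: "\<rho> > 0" and s: "simple_function lborel s" and n: "\<And>t. \<bar>t\<bar> > n \<Longrightarrow> s t = 0"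
  shows "\<exists>\<psi>. (\<psi>, (\<lambda>t. exp (-2*\<rho>*t) *\<^sub>R s t)) \<in> wH1 (-\<rho>)"
proof -
  define V where "V = s ` UNIV - {0}"
  have finR: "finite (s ` UNIV)" using simple_functionD(1)[OF s] by simp
  hence finV: "finite V" unfolding V_def by simp
  have sv: "s -` {v} \<in> sets lborel" for v
  proof (cases "v \<in> s ` UNIV")
    case True thus ?thesis using simple_functionD(2)[OF s, of "{v}"] by simp
  next
    case False hence "s -` {v} = {}" by auto
    thus ?thesis by simp
  qed
  define g where "g v t = exp (-2*\<rho>*t) * indicator (s -` {v}) t" for v t
  define B where "B = exp (2*\<rho>*\<bar>n\<bar>)"
  have expB: "exp (-2*\<rho>*t) \<le> B" if "\<bar>t\<bar> \<le> \<bar>n\<bar>" for t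
  proof -
    have "-t \<le> \<bar>n\<bar>" using that by linarith
    hence "\<rho>*(-t) \<le> \<rho>*\<bar>n\<bar>" using \<rho> by (intro mult_left_mono) auto
    hence "-2*\<rho>*t \<le> 2*\<rho>*\<bar>n\<bar>" by simp
    thus ?thesis unfolding B_def by simp
  qed
  have gm: "g v \<in> borel_measurable lborel" for v
  proof -
    have "(\<lambda>t. indicator (s -` {v}) t :: real) \<in> borel_measurable lborel"
      using sv by (rule borel_measurable_indicator)
    thus ?thesis unfolding g_def by (intro borel_measurable_times) auto
  qed
  have gn: "g v t = 0" if "v \<in> V" "\<bar>t\<bar> > n" for v t
    using that n[of t] unfolding g_def V_def by (auto simp: indicator_def)
  have B0: "B \<ge> 0" unfolding B_def by simp
  have gB: "\<bar>g v t\<bar> \<le> B" if "v \<in> V" for v t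
  proof (cases "\<bar>t\<bar> > n")
    case True thus ?thesis using gn[OF that True] unfolding B_def by simp
  next
    case False thus ?thesis using expB[of t] B0 unfolding g_def by (auto simp: indicator_def)
  qed
  define \<psi> where "\<psi> t = (\<Sum>v\<in>V. Phi (g v) t *\<^sub>R v)" for t
  define \<psi>' where "\<psi>' t = exp (-2*\<rho>*t) *\<^sub>R s t" for t
  have \<psi>'_eq: "\<psi>' t = (\<Sum>v\<in>V. g v t *\<^sub>R v)" for t
  proof -
    have "(\<Sum>v\<in>V. g v t *\<^sub>R v) = (\<Sum>v\<in>V. if s t = v then exp (-2*\<rho>*t) *\<^sub>R v else 0)"
      unfolding g_def by (intro sum.cong) (auto simp: indicator_def)
    also have "\<dots> = (if s t \<in> V then exp (-2*\<rho>*t) *\<^sub>R s t else 0)"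
      using finV by (simp add: sum.delta)
    also have "\<dots> = \<psi>' t" unfolding \<psi>'_def V_def by auto
    finally show ?thesis by simp
  qed
  have \<psi>'m: "\<psi>' \<in> borel_measurable lborel"
  proof -
    have "(\<lambda>t. (\<lambda>x v. x *\<^sub>R v) (exp (-2*\<rho>*t)) (s t)) \<in> borel_measurable lborel"
      by (rule meas_simple_comb[OF _ s]) (auto intro: continuous_intros)
    thus ?thesis unfolding \<psi>'_def by simp
  qed
  have \<psi>'s: "\<exists>D. countable D \<and> (AE t in lborel. \<psi>' t \<in> closure D)"
  proof (intro exI conjI)
    let ?D = "\<Union>v\<in>s ` UNIV. (\<lambda>q. q *\<^sub>R v) ` \<rat>"
    show "countable ?D" using finR countable_rat by (intro countable_UN) (auto intro: countable_finite)
    show "AE t in lborel. \<psi>' t \<in> closure ?D"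
    proof (rule AE_I2)
      fix t
      have "\<psi>' t \<in> closure ((\<lambda>q. q *\<^sub>R s t) ` \<rat>)"
        unfolding \<psi>'_def by (rule closure_cont_image) (auto intro: continuous_intros simp: Rats_closure_real)
      also have "\<dots> \<subseteq> closure ?D" by (intro closure_mono) auto
      finally show "\<psi>' t \<in> closure ?D" .
    qed
  qed
  define SM where "SM = (\<Sum>v\<in>s ` UNIV. norm v)"
  have SM: "norm (s t) \<le> SM" for t
    unfolding SM_def using finR by (intro member_le_sum) auto
  have \<psi>'i: "integrable lborel (\<lambda>t. (norm (\<psi>' t))\<^sup>2 * exp (-2 * (-\<rho>) * t))"
  proof (rule Bochner_Integration.integrable_bound)
    show "integrable lborel (\<lambda>t. indicator {-\<bar>n\<bar>..\<bar>n\<bar>} t *\<^sub>R (B * SM\<^sup>2))"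
      by (intro integrable_indicator) (auto simp: emeasure_lborel_Icc_eq)
    have "(\<lambda>t. (\<lambda>x v. (norm (exp (-2*\<rho>*x) *\<^sub>R v))\<^sup>2 * exp (-2 * (-\<rho>) * x)) t (s t)) \<in> borel_measurable lborel"
      by (rule meas_simple_comb[OF _ s]) (auto intro!: continuous_intros)
    thus "(\<lambda>t. (norm (\<psi>' t))\<^sup>2 * exp (-2 * (-\<rho>) * t)) \<in> borel_measurable lborel"
      unfolding \<psi>'_def by simp
    show "AE t in lborel. norm ((norm (\<psi>' t))\<^sup>2 * exp (-2 * (-\<rho>) * t)) \<le> norm (indicator {-\<bar>n\<bar>..\<bar>n\<bar>} t *\<^sub>R (B * SM\<^sup>2))"
    proof (rule AE_I2)
      fix t
      have eq: "(norm (\<psi>' t))\<^sup>2 * exp (-2 * (-\<rho>) * t) = exp (-2*\<rho>*t) * (norm (s t))\<^sup>2"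
      proof -
        have "(norm (\<psi>' t))\<^sup>2 * exp (-2 * (-\<rho>) * t) = (exp (-2*\<rho>*t) * exp (-2*\<rho>*t) * exp (2*\<rho>*t)) * (norm (s t))\<^sup>2"
          unfolding \<psi>'_def by (simp add: power2_eq_square)
        also have "exp (-2*\<rho>*t) * exp (-2*\<rho>*t) * exp (2*\<rho>*t) = exp (-2*\<rho>*t)"
          by (simp add: exp_add[symmetric])
        finally show ?thesis .
      qed
      show "norm ((norm (\<psi>' t))\<^sup>2 * exp (-2 * (-\<rho>) * t)) \<le> norm (indicator {-\<bar>n\<bar>..\<bar>n\<bar>} t *\<^sub>R (B * SM\<^sup>2))"
      proof (cases "\<bar>t\<bar> \<le> \<bar>n\<bar>")
        case True
        have "(norm (s t))\<^sup>2 \<le> SM\<^sup>2" using SM[of t] by (intro power_mono) auto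
        hence "exp (-2*\<rho>*t) * (norm (s t))\<^sup>2 \<le> B * SM\<^sup>2"
          using expB[OF True] B0 by (intro mult_mono) auto
        thus ?thesis using True unfolding eq by (auto simp: abs_le_iff)
      next
        case False thus ?thesis using n[of t] unfolding eq by simp
      qed
    qed
  qed
  have \<psi>'L: "\<psi>' \<in> wL2 (-\<rho>)" unfolding wL2_def using \<psi>'m \<psi>'s \<psi>'i by blast
  have Pc: "continuous_on UNIV (Phi (g v))" if "v \<in> V" for v
    by (rule Phi_cont[OF gm gB[OF that] gn[OF that]])
  have \<psi>c: "continuous_on UNIV \<psi>"
    unfolding \<psi>_def by (intro continuous_on_sum continuous_on_scaleR Pc continuous_on_const)
  have \<psi>m: "\<psi> \<in> borel_measurable lborel"
    using borel_measurable_continuous_onI[OF \<psi>c] by simp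
  have \<psi>s: "\<exists>D. countable D \<and> (AE t in lborel. \<psi> t \<in> closure D)"
  proof (intro exI conjI)
    show "countable (\<psi> ` \<rat>)" by (rule countable_image[OF countable_rat])
    show "AE t in lborel. \<psi> t \<in> closure (\<psi> ` \<rat>)"
      by (intro AE_I2 closure_cont_image[OF \<psi>c]) (simp add: Rats_closure_real)
  qed
  define K where "K = (\<Sum>v\<in>V. B * (2 * \<bar>n\<bar> + 1) * norm v)"
  have \<psi>K: "norm (\<psi> t) \<le> K" for t
  proof -
    have "norm (\<psi> t) \<le> (\<Sum>v\<in>V. norm (Phi (g v) t *\<^sub>R v))" unfolding \<psi>_def by (rule norm_sum)
    also have "\<dots> \<le> K" unfolding K_def
    proof (rule sum_mono)
      fix v assume v: "v \<in> V"
      show "norm (Phi (g v) t *\<^sub>R v) \<le> B * (2 * \<bar>n\<bar> + 1) * norm v"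
        using Phi_bound[OF gm gB[OF v] gn[OF v], where t=t] by (simp add: mult_right_mono)
    qed
    finally show ?thesis .
  qed
  have \<psi>0: "\<psi> t = 0" if "t > \<bar>n\<bar>" for t
    unfolding \<psi>_def using Phi_zero[OF gn that] by simp
  have \<psi>i: "integrable lborel (\<lambda>t. (norm (\<psi> t))\<^sup>2 * exp (-2 * (-\<rho>) * t))"
  proof (rule Bochner_Integration.integrable_bound)
    show "integrable lborel (\<lambda>t. K\<^sup>2 * (indicator {..\<bar>n\<bar>} t * exp ((2*\<rho>) * t)))"
      using exp_int_pos[of "2*\<rho>" "\<bar>n\<bar>"] \<rho> by simp
    show "(\<lambda>t. (norm (\<psi> t))\<^sup>2 * exp (-2 * (-\<rho>) * t)) \<in> borel_measurable lborel"
      using \<psi>m by measurable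
    show "AE t in lborel. norm ((norm (\<psi> t))\<^sup>2 * exp (-2 * (-\<rho>) * t)) \<le> norm (K\<^sup>2 * (indicator {..\<bar>n\<bar>} t * exp ((2*\<rho>) * t)))"
    proof (rule AE_I2)
      fix t show "norm ((norm (\<psi> t))\<^sup>2 * exp (-2 * (-\<rho>) * t)) \<le> norm (K\<^sup>2 * (indicator {..\<bar>n\<bar>} t * exp ((2*\<rho>) * t)))"
      proof (cases "t \<le> \<bar>n\<bar>")
        case True
        have "(norm (\<psi> t))\<^sup>2 \<le> K\<^sup>2" using \<psi>K[of t] by (intro power_mono) auto
        thus ?thesis using True by (simp add: mult_right_mono)
      next
        case False thus ?thesis using \<psi>0[of t] by simp
      qed
    qed
  qed
  have \<psi>L: "\<psi> \<in> wL2 (-\<rho>)" unfolding wL2_def using \<psi>m \<psi>s \<psi>i by blast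
  have wd: "weak_deriv \<psi> \<psi>'"
    unfolding weak_deriv_def
  proof (intro allI impI)
    fix \<eta> Dk h assume tf: "test_fun \<eta> Dk"
    have pw1: "(\<lambda>t. inner (\<psi> t) h * Dk 1 t) = (\<lambda>t. \<Sum>v\<in>V. (Phi (g v) t * Dk 1 t) * inner v h)"
      unfolding \<psi>_def by (simp add: inner_sum_left sum_distrib_left sum_distrib_right algebra_simps)
    have pw2: "(\<lambda>t. inner (\<psi>' t) h * \<eta> t) = (\<lambda>t. \<Sum>v\<in>V. (g v t * \<eta> t) * inner v h)"
      unfolding \<psi>'_eq by (simp add: inner_sum_left sum_distrib_left sum_distrib_right algebra_simps)
    have PI: "integrable lborel (\<lambda>t. (Phi (g v) t * Dk 1 t) * inner v h)" if "v \<in> V" for v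
      using Phi_weak(1)[OF gm gB[OF that] gn[OF that] tf] by simp
    have GI: "integrable lborel (\<lambda>t. (g v t * \<eta> t) * inner v h)" if "v \<in> V" for v
      using Phi_weak(2)[OF gm gB[OF that] gn[OF that] tf] by simp
    have "(\<integral>t. inner (\<psi> t) h * Dk 1 t \<partial>lborel) = (\<Sum>v\<in>V. (\<integral>t. (Phi (g v) t * Dk 1 t) * inner v h \<partial>lborel))"
      unfolding pw1 by (rule Bochner_Integration.integral_sum) (rule PI)
    also have "\<dots> = (\<Sum>v\<in>V. (\<integral>t. Phi (g v) t * Dk 1 t \<partial>lborel) * inner v h)"
      by simp
    also have "\<dots> = (\<Sum>v\<in>V. - (\<integral>t. g v t * \<eta> t \<partial>lborel) * inner v h)"
    proof (intro sum.cong refl)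
      fix v assume v: "v \<in> V"
      show "(\<integral>t. Phi (g v) t * Dk 1 t \<partial>lborel) * inner v h = - (\<integral>t. g v t * \<eta> t \<partial>lborel) * inner v h"
        using Phi_weak(3)[OF gm gB[OF v] gn[OF v] tf] by simp
    qed
    also have "\<dots> = - (\<Sum>v\<in>V. (\<integral>t. (g v t * \<eta> t) * inner v h \<partial>lborel))"
      by (simp add: sum_negf)
    also have "(\<Sum>v\<in>V. (\<integral>t. (g v t * \<eta> t) * inner v h \<partial>lborel)) = (\<integral>t. inner (\<psi>' t) h * \<eta> t \<partial>lborel)"
      unfolding pw2 by (rule Bochner_Integration.integral_sum[symmetric]) (rule GI)
    finally show "(\<integral>t. inner (\<psi> t) h * Dk 1 t \<partial>lborel) = - (\<integral>t. inner (\<psi>' t) h * \<eta> t \<partial>lborel)" .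
  qed
  have "(\<psi>, \<psi>') \<in> wH1 (-\<rho>)" unfolding wH1_def using \<psi>L \<psi>'L wd by blast
  thus ?thesis unfolding \<psi>'_def by blast
qed



lemma approx:
  fixes f :: "real \<Rightarrow> 'h::real_inner" and \<rho> \<epsilon> :: real
  assumes f: "f \<in> wL2 \<rho>" and \<epsilon>: "\<epsilon> > 0"
  shows "\<exists>s n. simple_function lborel s \<and> (\<forall>t. \<bar>t\<bar> > n \<longrightarrow> s t = 0)
           \<and> (\<forall>t. norm (s t) \<le> 2 * norm (f t))
           \<and> integrable lborel (\<lambda>t. (norm (f t - s t))\<^sup>2 * exp (-2*\<rho>*t))
           \<and> (\<integral>t. (norm (f t - s t))\<^sup>2 * exp (-2*\<rho>*t) \<partial>lborel) \<le> \<epsilon>"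
proof -
  from f have fm: "f \<in> borel_measurable lborel"
    and "\<exists>D. countable D \<and> (AE t in lborel. f t \<in> closure D)"
    and fi: "integrable lborel (\<lambda>t. (norm (f t))\<^sup>2 * exp (-2 * \<rho> * t))"
    unfolding wL2_def by auto
  then obtain D where D: "countable D" "AE t in lborel. f t \<in> closure D" by blast
  define D' where "D' = insert 0 D"
  have D'ne: "D' \<noteq> {}" and D'c: "countable D'" unfolding D'_def using D by auto
  define d where "d = from_nat_into D'"
  have rd: "range d = D'" unfolding d_def using D'ne D'c by simp
  define I where "I = (\<integral>t. (norm (f t))\<^sup>2 * exp (-2 * \<rho> * t) \<partial>lborel)"
  have I0: "I \<ge> 0" unfolding I_def by simp
  define \<delta> where "\<delta> = min (1/2) (\<epsilon> / (2 * (I + 1)))"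
  have \<delta>0: "\<delta> > 0" unfolding \<delta>_def using \<epsilon> I0 by simp
  have \<delta>1: "\<delta> \<le> 1/2" unfolding \<delta>_def by (rule min.cobounded1)
  have \<delta>I: "\<delta>\<^sup>2 * I \<le> \<epsilon> / 2"
  proof -
    have "\<delta>\<^sup>2 \<le> \<delta>" using \<delta>0 \<delta>1 by (simp add: power2_eq_square mult_le_cancel_left1)
    also have "\<dots> \<le> \<epsilon> / (2 * (I + 1))" unfolding \<delta>_def by simp
    finally have "\<delta>\<^sup>2 * I \<le> \<epsilon> / (2 * (I + 1)) * I" using I0 by (intro mult_right_mono) auto
    also have "\<dots> \<le> \<epsilon> / (2 * (I + 1)) * (I + 1)" using \<epsilon> I0 by (intro mult_left_mono) auto
    also have "\<dots> = \<epsilon> / 2" using I0 by (simp add: field_simps)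
    finally show ?thesis .
  qed
  define P where "P k t \<longleftrightarrow> norm (f t - d k) < \<delta> * norm (f t)" for k t
  define Bm where "Bm m = {t. \<bar>t\<bar> \<le> real m \<and> (\<exists>k\<le>m. P k t)}" for m :: nat
  define sm where "sm m t = (if t \<in> Bm m then d (LEAST k. P k t) else 0)" for m t
  have Pm: "(\<lambda>t. norm (f t - d k) - \<delta> * norm (f t)) \<in> borel_measurable lborel" for k
    by (rule borel_measurable_continuous_on[OF _ fm]) (intro continuous_intros)
  have Pp[measurable]: "Measurable.pred lborel (P k)" for k
  proof -
    have "Measurable.pred lborel (\<lambda>t. norm (f t - d k) - \<delta> * norm (f t) < 0)"
      using Pm[of k] by measurable
    thus ?thesis unfolding P_def by simp
  qed
  have Bms: "Bm m \<in> sets lborel" for m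
  proof -
    have "Measurable.pred lborel (\<lambda>t. \<bar>t\<bar> \<le> real m \<and> (\<exists>k\<le>m. P k t))" by measurable
    thus ?thesis unfolding Bm_def by (simp add: pred_def)
  qed
  have Lm: "(\<lambda>t. LEAST k. P k t) \<in> measurable lborel (count_space UNIV)"
    by (intro measurable_Least) measurable
  have smc: "sm m \<in> measurable lborel (count_space UNIV)" for m
  proof -
    have "(\<lambda>t. d (LEAST k. P k t)) \<in> measurable lborel (count_space UNIV)"
      by (rule measurable_compose[OF Lm]) simp
    thus ?thesis unfolding sm_def using Bms[of m]
      by (intro measurable_If_set) auto
  qed
  have Bm_least: "(LEAST k. P k t) \<le> m \<and> P (LEAST k. P k t) t" if "t \<in> Bm m" for t m
  proof -
    from that obtain k where k: "k \<le> m" "P k t" unfolding Bm_def by auto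
    show ?thesis using Least_le[of "\<lambda>k. P k t", OF k(2)] LeastI[of "\<lambda>k. P k t", OF k(2)] k(1) by simp
  qed
  have smr: "sm m ` UNIV \<subseteq> insert 0 (d ` {..m})" for m
    unfolding sm_def using Bm_least by auto
  have sms: "simple_function lborel (sm m)" for m
    unfolding simple_function_def
  proof
    show "finite (sm m ` space lborel)" using smr[of m] by (auto intro: finite_subset)
    show "\<forall>x\<in>sm m ` space lborel. sm m -` {x} \<inter> space lborel \<in> sets lborel"
      using measurable_sets[OF smc[of m], of "{_}"] by simp
  qed
  have smsupp: "\<bar>t\<bar> > real m \<Longrightarrow> sm m t = 0" for t m unfolding sm_def Bm_def by auto
  have smB: "norm (sm m t) \<le> 2 * norm (f t)" for m t
  proof (cases "t \<in> Bm m")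
    case True
    define k where "k = (LEAST k. P k t)"
    have Pk: "P k t" using Bm_least[OF True] unfolding k_def by simp
    have "norm (d k) \<le> norm (f t) + norm (f t - d k)" by (metis norm_triangle_sub add.commute norm_minus_commute)
    also have "\<dots> \<le> norm (f t) + \<delta> * norm (f t)" using Pk unfolding P_def by simp
    also have "\<dots> \<le> 2 * norm (f t)" using \<delta>1 mult_right_mono[of \<delta> 1 "norm (f t)"] by simp
    finally show ?thesis unfolding sm_def k_def using True by simp
  qed (simp add: sm_def)
  have smE: "norm (f t - sm m t) \<le> norm (f t)" for m t
  proof (cases "t \<in> Bm m")
    case True
    have Pk: "P (LEAST k. P k t) t" using Bm_least[OF True] by simp
    hence "norm (f t - sm m t) < \<delta> * norm (f t)" unfolding sm_def P_def using True by simp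
    thus ?thesis using \<delta>1 mult_right_mono[of \<delta> 1 "norm (f t)"] by simp
  qed (simp add: sm_def)
  have smE2: "(norm (f t - sm m t))\<^sup>2 \<le> \<delta>\<^sup>2 * (norm (f t))\<^sup>2 + indicator (- Bm m) t * (norm (f t))\<^sup>2" for m t
  proof (cases "t \<in> Bm m")
    case True
    have Pk: "P (LEAST k. P k t) t" using Bm_least[OF True] by simp
    hence "norm (f t - sm m t) \<le> \<delta> * norm (f t)" unfolding sm_def P_def using True by simp
    hence "(norm (f t - sm m t))\<^sup>2 \<le> (\<delta> * norm (f t))\<^sup>2" by (intro power_mono) auto
    thus ?thesis using True by (simp add: power_mult_distrib)
  next
    case False thus ?thesis by (simp add: sm_def)
  qed
  define w where "w t = (norm (f t))\<^sup>2 * exp (-2 * \<rho> * t)" for t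
  have wm: "w \<in> borel_measurable lborel" using fi unfolding w_def by auto
  have tail: "(\<lambda>m. \<integral>t. indicator (- Bm m) t * w t \<partial>lborel) \<longlonglongrightarrow> 0"
  proof -
    have a1: "(\<lambda>t. 0::real) \<in> borel_measurable lborel" by simp
    have a2: "(\<lambda>t. indicator (- Bm m) t * w t) \<in> borel_measurable lborel" for m
      using Bms[of m] wm by (intro borel_measurable_times borel_measurable_indicator) auto
    have a3: "integrable lborel w" using fi unfolding w_def by simp
    have a5: "AE t in lborel. norm (indicator (- Bm m) t * w t) \<le> w t" for m
      by (intro AE_I2) (auto simp: w_def indicator_def)
    have a4: "AE t in lborel. (\<lambda>m. indicator (- Bm m) t * w t) \<longlonglongrightarrow> 0"
      using D(2)
    proof eventually_elim
      fix t assume ft: "f t \<in> closure D"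
      show "(\<lambda>m. indicator (- Bm m) t * w t) \<longlonglongrightarrow> 0"
      proof (cases "f t = 0")
        case True thus ?thesis by (simp add: w_def)
      next
        case False
        have "f t \<in> closure D'" using ft closure_mono[of D D'] unfolding D'_def by auto
        then obtain y where y: "y \<in> D'" "dist y (f t) < \<delta> * norm (f t)"
          using closure_approachable[of "f t" D'] \<delta>0 False by (meson mult_pos_pos zero_less_norm_iff)
        then obtain k where k: "d k = y" using rd by (metis rangeE)
        have Pk: "P k t" unfolding P_def using y k by (simp add: dist_norm norm_minus_commute)
        define N where "N = max k (nat \<lceil>\<bar>t\<bar>\<rceil>)"
        have "eventually (\<lambda>m. indicator (- Bm m) t * w t = 0) sequentially"
        proof (rule eventually_sequentiallyI[of N])
          fix m assume m: "N \<le> m"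
          have "\<bar>t\<bar> \<le> real m" using m unfolding N_def by linarith
          moreover have "k \<le> m" using m unfolding N_def by simp
          ultimately have "t \<in> Bm m" unfolding Bm_def using Pk by auto
          thus "indicator (- Bm m) t * w t = 0" by simp
        qed
        thus ?thesis by (rule tendsto_eventually)
      qed
    qed
  note XX = integral_dominated_convergence[OF a1 a2 a3 a4 a5]
    thus ?thesis by simp
  qed
  hence "eventually (\<lambda>m. (\<integral>t. indicator (- Bm m) t * w t \<partial>lborel) < \<epsilon> / 2) sequentially"
    using \<epsilon> by (intro order_tendstoD) auto
  then obtain m where m: "(\<integral>t. indicator (- Bm m) t * w t \<partial>lborel) < \<epsilon> / 2"
    using eventually_sequentially by auto
  have im: "(\<lambda>t. (norm (f t - sm m t))\<^sup>2 * exp (-2*\<rho>*t)) \<in> borel_measurable lborel"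
  proof -
    have "(\<lambda>t. (\<lambda>x v. (norm (x - v))\<^sup>2) (f t) (sm m t)) \<in> borel_measurable lborel"
      by (rule meas_simple_comb[OF fm sms]) (intro continuous_intros)
    thus ?thesis by (intro borel_measurable_times) auto
  qed
  have ii: "integrable lborel (\<lambda>t. (norm (f t - sm m t))\<^sup>2 * exp (-2*\<rho>*t))"
  proof (rule Bochner_Integration.integrable_bound[OF fi im])
    show "AE t in lborel. norm ((norm (f t - sm m t))\<^sup>2 * exp (-2*\<rho>*t)) \<le> norm ((norm (f t))\<^sup>2 * exp (-2 * \<rho> * t))"
    proof (rule AE_I2)
      fix t have "(norm (f t - sm m t))\<^sup>2 \<le> (norm (f t))\<^sup>2" using smE[of t m] by (intro power_mono) auto
      thus "norm ((norm (f t - sm m t))\<^sup>2 * exp (-2*\<rho>*t)) \<le> norm ((norm (f t))\<^sup>2 * exp (-2 * \<rho> * t))"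
        by (simp add: mult_right_mono)
    qed
  qed
  have iw: "integrable lborel (\<lambda>t. indicator (- Bm m) t * w t)"
    using fi Bms[of m] unfolding w_def by (intro integrable_ind_mult) auto
  have "(\<integral>t. (norm (f t - sm m t))\<^sup>2 * exp (-2*\<rho>*t) \<partial>lborel)
        \<le> (\<integral>t. \<delta>\<^sup>2 * w t + indicator (- Bm m) t * w t \<partial>lborel)"
  proof (rule integral_mono[OF ii])
    show "integrable lborel (\<lambda>t. \<delta>\<^sup>2 * w t + indicator (- Bm m) t * w t)"
      using fi iw unfolding w_def by (intro Bochner_Integration.integrable_add) auto
    fix t show "(norm (f t - sm m t))\<^sup>2 * exp (-2*\<rho>*t) \<le> \<delta>\<^sup>2 * w t + indicator (- Bm m) t * w t"
      using mult_right_mono[OF smE2[of t m], of "exp (-2*\<rho>*t)"] unfolding w_def by (simp add: algebra_simps)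
  qed
  also have "\<dots> = \<delta>\<^sup>2 * I + (\<integral>t. indicator (- Bm m) t * w t \<partial>lborel)"
    using fi iw unfolding w_def I_def by (subst Bochner_Integration.integral_add) auto
  also have "\<dots> \<le> \<epsilon>" using \<delta>I m by simp
  finally have "(\<integral>t. (norm (f t - sm m t))\<^sup>2 * exp (-2*\<rho>*t) \<partial>lborel) \<le> \<epsilon>" .
  thus ?thesis using sms[of m] smsupp[of m] smB[of m] ii
    by (intro exI[of _ "sm m"] exI[of _ "real m"]) auto
qed



lemma lipc:
  fixes F :: "(real \<Rightarrow> 'h::real_inner) \<Rightarrow> ((real \<Rightarrow> 'h) \<Rightarrow> real)"
  assumes L: "\<exists>L. lip_bound \<rho> F L"
  shows "lip_const \<rho> F \<ge> 0"
    and "x \<in> wL2 \<rho> \<Longrightarrow> y \<in> wL2 \<rho> \<Longrightarrow>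
         dnorm \<rho> (\<lambda>\<psi>. F x \<psi> - F y \<psi>) \<le> lip_const \<rho> F * wnorm \<rho> (\<lambda>t. x t - y t)"
proof -
  define S where "S = {L. L \<ge> 0 \<and> lip_bound \<rho> F L}"
  from L obtain L0 where L0: "lip_bound \<rho> F L0" by blast
  have mono: "lip_bound \<rho> F L'" if "lip_bound \<rho> F L" "L \<le> L'" for L L'
    using that unfolding lip_bound_def
    by (meson mult_right_mono order_trans wnorm_nonneg)
  have "max L0 0 \<in> S" unfolding S_def using mono[OF L0] by simp
  hence ne: "S \<noteq> {}" by blast
  show "lip_const \<rho> F \<ge> 0" unfolding lip_const_def S_def[symmetric]
    using ne by (intro cInf_greatest) (auto simp: S_def)
  assume x: "x \<in> wL2 \<rho>" and y: "y \<in> wL2 \<rho>"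
  define W where "W = wnorm \<rho> (\<lambda>t. x t - y t)"
  define d where "d = dnorm \<rho> (\<lambda>\<psi>. F x \<psi> - F y \<psi>)"
  have dL: "d \<le> L * W" if "L \<in> S" for L
    using that x y unfolding S_def lip_bound_def d_def W_def by blast
  show "dnorm \<rho> (\<lambda>\<psi>. F x \<psi> - F y \<psi>) \<le> lip_const \<rho> F * wnorm \<rho> (\<lambda>t. x t - y t)"
    unfolding d_def[symmetric] W_def[symmetric]
  proof (cases "W = 0")
    case True thus "d \<le> lip_const \<rho> F * W" using dL \<open>max L0 0 \<in> S\<close> by force
  next
    case False
    hence W: "W > 0" using wnorm_nonneg unfolding W_def by (metis less_eq_real_def)
    have "d / W \<le> Inf S"
      using ne by (intro cInf_greatest) (use dL W in \<open>auto simp: divide_le_eq\<close>)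
    thus "d \<le> lip_const \<rho> F * W" unfolding lip_const_def S_def[symmetric] using W
      by (simp add: divide_le_eq)
  qed
qed

lemma ip_bound: "\<bar>inner (a::'h::real_inner) b\<bar> \<le> (norm a)\<^sup>2 + (norm b)\<^sup>2"
proof -
  have "\<bar>inner a b\<bar> \<le> norm a * norm b" by (rule Cauchy_Schwarz_ineq2)
  also have "\<dots> \<le> (norm a)\<^sup>2 + (norm b)\<^sup>2"
  proof -
    have "0 \<le> (norm a - norm b)\<^sup>2" by simp
    hence "2 * norm a * norm b \<le> (norm a)\<^sup>2 + (norm b)\<^sup>2" by (simp add: power2_diff)
    moreover have "0 \<le> norm a * norm b" by simp
    ultimately show ?thesis by linarith
  qed
  finally show ?thesis .
qed

lemma sq_bound: "((x::real) + y)\<^sup>2 \<le> 2 * x\<^sup>2 + 2 * y\<^sup>2"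
proof -
  have "0 \<le> (x - y)\<^sup>2" by simp
  thus ?thesis by (simp add: power2_diff power2_sum)
qed



theorem theorem3p6:
  fixes F G :: "(real \<Rightarrow> 'h::{real_inner, complete_space}) \<Rightarrow> ((real \<Rightarrow> 'h) \<Rightarrow> real)"
    and u v :: "real \<Rightarrow> 'h" and \<rho> :: real
  assumes "\<rho> > 0"
    and "\<forall>x \<in> wL2 \<rho>. F x \<in> wHm1 \<rho>"
    and "\<forall>x \<in> wL2 \<rho>. G x \<in> wHm1 \<rho>"
    and "\<exists>L. lip_bound \<rho> F L"
    and "\<exists>L. lip_bound \<rho> G L"
    and "(lip_const \<rho> F + lip_const \<rho> G) / 2 < 1"
    and "u \<in> wL2 \<rho>" and "v \<in> wL2 \<rho>"
    and "deriv_eq \<rho> u (F u)"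
    and "deriv_eq \<rho> v (G v)"
  shows "ereal (wnorm \<rho> (\<lambda>t. u t - v t))
           \<le> ereal (1 / (1 - (lip_const \<rho> F + lip_const \<rho> G) / 2))
              * (SUP x \<in> wL2 \<rho>. ereal (dnorm \<rho> (\<lambda>\<psi>. F x \<psi> - G x \<psi>)))"
proof -
  note \<rho> = assms(1) and uL = assms(7) and vL = assms(8)
  have Fu: "F u \<in> wHm1 \<rho>" and Fv: "F v \<in> wHm1 \<rho>" and Gu: "G u \<in> wHm1 \<rho>" and Gv: "G v \<in> wHm1 \<rho>"
    using assms(2,3) uL vL by auto
  define LF where "LF = lip_const \<rho> F"
  define LG where "LG = lip_const \<rho> G"
  define k where "k = (LF + LG) / 2"
  have LF0: "LF \<ge> 0" unfolding LF_def by (rule lipc(1)[OF assms(4)])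
  have LG0: "LG \<ge> 0" unfolding LG_def by (rule lipc(1)[OF assms(5)])
  have k0: "k \<ge> 0" unfolding k_def using LF0 LG0 by simp
  have k1: "k < 1" unfolding k_def LF_def LG_def using assms(6) by simp
  define au where "au = dnorm \<rho> (\<lambda>\<psi>. F u \<psi> - G u \<psi>)"
  define av where "av = dnorm \<rho> (\<lambda>\<psi>. F v \<psi> - G v \<psi>)"
  have au0: "au \<ge> 0" unfolding au_def by (rule dnorm_nonneg[OF Fu Gu])
  have av0: "av \<ge> 0" unfolding av_def by (rule dnorm_nonneg[OF Fv Gv])
  define m where "m = max au av"
  have m0: "m \<ge> 0" unfolding m_def using au0 by simp
  define SUPV where "SUPV = (SUP x \<in> wL2 \<rho>. ereal (dnorm \<rho> (\<lambda>\<psi>. F x \<psi> - G x \<psi>)))"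
  have mS: "ereal m \<le> SUPV"
  proof -
    have "ereal au \<le> SUPV" unfolding SUPV_def au_def using uL by (rule SUP_upper)
    moreover have "ereal av \<le> SUPV" unfolding SUPV_def av_def using vL by (rule SUP_upper)
    ultimately show ?thesis unfolding m_def by (simp add: max_def)
  qed
  define N where "N = wnorm \<rho> (\<lambda>t. u t - v t)"
  have N0: "N \<ge> 0" unfolding N_def by (rule wnorm_nonneg)
  have key: "N \<le> m / (1 - k)"
  proof (cases "integrable lborel (\<lambda>t. (norm (u t - v t))\<^sup>2 * exp (-2*\<rho>*t))")
    case False
    hence "N = 0" unfolding N_def wnorm_def by (simp add: not_integrable_integral_eq)
    thus ?thesis using m0 k1 by simp
  next
    case True
    define K where "K = k * N + m"
    have K0: "K \<ge> 0" unfolding K_def using k0 N0 m0 by simp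
    have "N\<^sup>2 \<le> K\<^sup>2"
    proof (rule field_le_epsilon)
      fix \<epsilon> :: real assume \<epsilon>: "0 < \<epsilon>"
      obtain su nu where su: "simple_function lborel su" "\<forall>t. \<bar>t\<bar> > nu \<longrightarrow> su t = 0"
          "\<forall>t. norm (su t) \<le> 2 * norm (u t)"
          "integrable lborel (\<lambda>t. (norm (u t - su t))\<^sup>2 * exp (-2*\<rho>*t))"
          "(\<integral>t. (norm (u t - su t))\<^sup>2 * exp (-2*\<rho>*t) \<partial>lborel) \<le> \<epsilon>/8"
        using approx[OF uL, of "\<epsilon>/8"] \<epsilon> by auto
      obtain sv nv where sv: "simple_function lborel sv" "\<forall>t. \<bar>t\<bar> > nv \<longrightarrow> sv t = 0"
          "\<forall>t. norm (sv t) \<le> 2 * norm (v t)"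
          "integrable lborel (\<lambda>t. (norm (v t - sv t))\<^sup>2 * exp (-2*\<rho>*t))"
          "(\<integral>t. (norm (v t - sv t))\<^sup>2 * exp (-2*\<rho>*t) \<partial>lborel) \<le> \<epsilon>/8"
        using approx[OF vL, of "\<epsilon>/8"] \<epsilon> by auto
      define s where "s t = su t - sv t" for t
      have ss: "simple_function lborel s" unfolding s_def using su(1) sv(1) by auto
      have sn: "\<And>t. \<bar>t\<bar> > max nu nv \<Longrightarrow> s t = 0" unfolding s_def using su(2) sv(2) by auto
      define \<psi>' where "\<psi>' t = exp (-2*\<rho>*t) *\<^sub>R s t" for t
      obtain \<psi> where p: "(\<psi>, \<psi>') \<in> wH1 (-\<rho>)"
        using build[OF \<rho> ss sn] unfolding \<psi>'_def[abs_def] by blast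
      have \<psi>'L: "\<psi>' \<in> wL2 (-\<rho>)" using p unfolding wH1_def by auto
      have IP: "integrable lborel (\<lambda>t. (norm (\<psi>' t))\<^sup>2 * exp (-2 * (-\<rho>) * t))"
        using \<psi>'L unfolding wL2_def by auto
      define M where "M = wnorm (-\<rho>) \<psi>'"
      have M0: "M \<ge> 0" unfolding M_def by (rule wnorm_nonneg)
      have M2: "M\<^sup>2 = (\<integral>t. (norm (\<psi>' t))\<^sup>2 * exp (-2 * (-\<rho>) * t) \<partial>lborel)"
        unfolding M_def wnorm_def by (simp add: integral_nonneg_AE)
      have N2: "N\<^sup>2 = (\<integral>t. (norm (u t - v t))\<^sup>2 * exp (-2*\<rho>*t) \<partial>lborel)"
        unfolding N_def wnorm_def by (simp add: integral_nonneg_AE)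
      have um: "u \<in> borel_measurable lborel" and iu: "integrable lborel (\<lambda>t. (norm (u t))\<^sup>2 * exp (-2 * \<rho> * t))"
        using uL unfolding wL2_def by auto
      have vm: "v \<in> borel_measurable lborel" and iv: "integrable lborel (\<lambda>t. (norm (v t))\<^sup>2 * exp (-2 * \<rho> * t))"
        using vL unfolding wL2_def by auto
      have snorm: "(norm (s t))\<^sup>2 \<le> 8 * (norm (u t))\<^sup>2 + 8 * (norm (v t))\<^sup>2" for t
      proof -
        have "norm (s t) \<le> 2 * norm (u t) + 2 * norm (v t)"
          unfolding s_def using norm_triangle_ineq4[of "su t" "sv t"] su(3) sv(3) by smt
        hence "(norm (s t))\<^sup>2 \<le> (2 * norm (u t) + 2 * norm (v t))\<^sup>2" by (intro power_mono) auto
        also have "\<dots> \<le> 2 * (2 * norm (u t))\<^sup>2 + 2 * (2 * norm (v t))\<^sup>2" by (rule sq_bound)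
        finally show ?thesis by (simp add: power_mult_distrib)
      qed
      have ipsi: "integrable lborel (\<lambda>t. inner (w t) (\<psi>' t))"
        if wm: "w \<in> borel_measurable lborel" and wn: "\<And>t. norm (w t) \<le> norm (u t) + norm (v t)" for w
      proof (rule Bochner_Integration.integrable_bound)
        show "integrable lborel (\<lambda>t. 11 * ((norm (u t))\<^sup>2 * exp (-2 * \<rho> * t)) + 10 * ((norm (v t))\<^sup>2 * exp (-2 * \<rho> * t)))"
          using iu iv by (intro Bochner_Integration.integrable_add integrable_mult_right)
        have "(\<lambda>t. exp (-2*\<rho>*t) * (\<lambda>x y. inner x y) (w t) (s t)) \<in> borel_measurable lborel"
          by (intro borel_measurable_times meas_simple_comb[OF wm ss]) (auto intro: continuous_intros)
        thus "(\<lambda>t. inner (w t) (\<psi>' t)) \<in> borel_measurable lborel" unfolding \<psi>'_def by simp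
        show "AE t in lborel. norm (inner (w t) (\<psi>' t)) \<le> norm (11 * ((norm (u t))\<^sup>2 * exp (-2 * \<rho> * t)) + 10 * ((norm (v t))\<^sup>2 * exp (-2 * \<rho> * t)))"
        proof (rule AE_I2)
          fix t
          have "(norm (w t))\<^sup>2 \<le> (norm (u t) + norm (v t))\<^sup>2" using wn[of t] by (intro power_mono) auto
          also have "\<dots> \<le> 2 * (norm (u t))\<^sup>2 + 2 * (norm (v t))\<^sup>2" by (rule sq_bound)
          finally have w2: "(norm (w t))\<^sup>2 \<le> 2 * (norm (u t))\<^sup>2 + 2 * (norm (v t))\<^sup>2" .
          have "\<bar>inner (w t) (s t)\<bar> \<le> (norm (w t))\<^sup>2 + (norm (s t))\<^sup>2" by (rule ip_bound)
          also have "\<dots> \<le> 10 * (norm (u t))\<^sup>2 + 10 * (norm (v t))\<^sup>2" using w2 snorm[of t] by simp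
          also have "\<dots> \<le> 11 * (norm (u t))\<^sup>2 + 10 * (norm (v t))\<^sup>2" by simp
          finally have "exp (-2*\<rho>*t) * \<bar>inner (w t) (s t)\<bar> \<le> exp (-2*\<rho>*t) * (11 * (norm (u t))\<^sup>2 + 10 * (norm (v t))\<^sup>2)"
            by (intro mult_left_mono) auto
          thus "norm (inner (w t) (\<psi>' t)) \<le> norm (11 * ((norm (u t))\<^sup>2 * exp (-2 * \<rho> * t)) + 10 * ((norm (v t))\<^sup>2 * exp (-2 * \<rho> * t)))"
            unfolding \<psi>'_def by (simp add: abs_mult algebra_simps)
        qed
      qed
      have IU: "integrable lborel (\<lambda>t. inner (u t) (\<psi>' t))" by (rule ipsi[OF um]) simp
      have IV: "integrable lborel (\<lambda>t. inner (v t) (\<psi>' t))" by (rule ipsi[OF vm]) simp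
      define X where "X = (\<integral>t. inner (u t) (\<psi>' t) \<partial>lborel) - (\<integral>t. inner (v t) (\<psi>' t) \<partial>lborel)"
      have pw: "(norm (u t - v t))\<^sup>2 * exp (-2*\<rho>*t) - 2 * (inner (u t) (\<psi>' t) - inner (v t) (\<psi>' t))
                 + (norm (\<psi>' t))\<^sup>2 * exp (-2 * (-\<rho>) * t)
               \<le> 2 * ((norm (u t - su t))\<^sup>2 * exp (-2*\<rho>*t)) + 2 * ((norm (v t - sv t))\<^sup>2 * exp (-2*\<rho>*t))" for t
      proof -
        define e where "e = exp (-2*\<rho>*t)"
        define a where "a = u t - v t"
        have e0: "e > 0" unfolding e_def by simp
        have i1: "inner (u t) (\<psi>' t) - inner (v t) (\<psi>' t) = e * inner a (s t)"
          unfolding \<psi>'_def a_def e_def by (simp add: inner_diff_left right_diff_distrib)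
        have i2: "(norm (\<psi>' t))\<^sup>2 * exp (-2 * (-\<rho>) * t) = e * (norm (s t))\<^sup>2"
        proof -
          have "(norm (\<psi>' t))\<^sup>2 * exp (-2 * (-\<rho>) * t) = (e * e * exp (2*\<rho>*t)) * (norm (s t))\<^sup>2"
            unfolding \<psi>'_def e_def by (simp add: power2_eq_square)
          also have "e * e * exp (2*\<rho>*t) = e" unfolding e_def by (simp add: exp_add[symmetric])
          finally show ?thesis .
        qed
        have i3: "(norm (a - s t))\<^sup>2 = (norm a)\<^sup>2 - 2 * inner a (s t) + (norm (s t))\<^sup>2"
          by (simp add: power2_norm_eq_inner inner_diff_left inner_diff_right inner_commute)
        have "norm (a - s t) \<le> norm (u t - su t) + norm (v t - sv t)"
        proof -
          have "a - s t = (u t - su t) - (v t - sv t)" unfolding a_def s_def by (simp add: algebra_simps)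
          thus ?thesis by (metis norm_triangle_ineq4)
        qed
        hence "(norm (a - s t))\<^sup>2 \<le> (norm (u t - su t) + norm (v t - sv t))\<^sup>2" by (intro power_mono) auto
        also have "\<dots> \<le> 2 * (norm (u t - su t))\<^sup>2 + 2 * (norm (v t - sv t))\<^sup>2" by (rule sq_bound)
        finally have "e * (norm (a - s t))\<^sup>2 \<le> e * (2 * (norm (u t - su t))\<^sup>2 + 2 * (norm (v t - sv t))\<^sup>2)"
          using e0 by (intro mult_left_mono) auto
        thus ?thesis unfolding i1 i2 unfolding a_def[symmetric] e_def[symmetric] i3
          by (simp add: algebra_simps)
      qed
      have intL: "(\<integral>t. (norm (u t - v t))\<^sup>2 * exp (-2*\<rho>*t) - 2 * (inner (u t) (\<psi>' t) - inner (v t) (\<psi>' t))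
                 + (norm (\<psi>' t))\<^sup>2 * exp (-2 * (-\<rho>) * t) \<partial>lborel) = N\<^sup>2 - 2 * X + M\<^sup>2"
        unfolding N2 M2 X_def using True IU IV IP
        by (simp add: Bochner_Integration.integral_add Bochner_Integration.integral_diff)
      have "N\<^sup>2 - 2 * X + M\<^sup>2 \<le> (\<integral>t. 2 * ((norm (u t - su t))\<^sup>2 * exp (-2*\<rho>*t)) + 2 * ((norm (v t - sv t))\<^sup>2 * exp (-2*\<rho>*t)) \<partial>lborel)"
        unfolding intL[symmetric]
        by (rule integral_mono[OF _ _ pw]) (use True IU IV IP su(4) sv(4) in auto)
      also have "\<dots> = 2 * (\<integral>t. (norm (u t - su t))\<^sup>2 * exp (-2*\<rho>*t) \<partial>lborel) + 2 * (\<integral>t. (norm (v t - sv t))\<^sup>2 * exp (-2*\<rho>*t) \<partial>lborel)"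
        using su(4) sv(4) by (simp add: Bochner_Integration.integral_add)
      also have "\<dots> \<le> \<epsilon> / 2" using su(5) sv(5) by simp
      finally have E: "N\<^sup>2 - 2 * X + M\<^sup>2 \<le> \<epsilon> / 2" .
      have dFu: "F u \<psi> = - (\<integral>t. inner (u t) (\<psi>' t) \<partial>lborel)"
        using assms(9) p unfolding deriv_eq_def by fast
      have dGv: "G v \<psi> = - (\<integral>t. inner (v t) (\<psi>' t) \<partial>lborel)"
        using assms(10) p unfolding deriv_eq_def by fast
      have Xe: "X = G v \<psi> - F u \<psi>" unfolding X_def dFu dGv by simp
      have b1: "\<bar>F u \<psi> - F v \<psi>\<bar> \<le> LF * N * M"
      proof -
        have "\<bar>F u \<psi> - F v \<psi>\<bar> \<le> dnorm \<rho> (\<lambda>\<psi>. F u \<psi> - F v \<psi>) * M"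
          unfolding M_def by (rule dnorm_bound[OF Fu Fv p])
        also have "\<dots> \<le> LF * N * M" unfolding LF_def N_def
          using lipc(2)[OF assms(4) uL vL] M0 by (intro mult_right_mono) auto
        finally show ?thesis .
      qed
      have b4: "\<bar>G u \<psi> - G v \<psi>\<bar> \<le> LG * N * M"
      proof -
        have "\<bar>G u \<psi> - G v \<psi>\<bar> \<le> dnorm \<rho> (\<lambda>\<psi>. G u \<psi> - G v \<psi>) * M"
          unfolding M_def by (rule dnorm_bound[OF Gu Gv p])
        also have "\<dots> \<le> LG * N * M" unfolding LG_def N_def
          using lipc(2)[OF assms(5) uL vL] M0 by (intro mult_right_mono) auto
        finally show ?thesis .
      qed
      have b2: "\<bar>F v \<psi> - G v \<psi>\<bar> \<le> av * M"
        unfolding M_def av_def by (rule dnorm_bound[OF Fv Gv p])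
      have b3: "\<bar>F u \<psi> - G u \<psi>\<bar> \<le> au * M"
        unfolding M_def au_def by (rule dnorm_bound[OF Fu Gu p])
      have "au * M \<le> m * M" "av * M \<le> m * M" unfolding m_def using M0 by (auto intro: mult_right_mono)
      moreover have "K * M = (LF * N * M + LG * N * M) / 2 + m * M"
        unfolding K_def k_def by (simp add: algebra_simps)
      ultimately have XK: "\<bar>X\<bar> \<le> K * M" unfolding Xe using b1 b2 b3 b4 unfolding abs_le_iff by (elim conjE, intro conjI) argo+
      have "2 * K * M \<le> K\<^sup>2 + M\<^sup>2"
      proof -
        have "0 \<le> (K - M)\<^sup>2" by simp
        thus ?thesis by (simp add: power2_diff)
      qed
      thus "N\<^sup>2 \<le> K\<^sup>2 + \<epsilon>" using E XK \<epsilon> by linarith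
    qed
    hence "N \<le> K" using K0 by (rule power2_le_imp_le)
    hence "N * (1 - k) \<le> m" unfolding K_def by (simp add: algebra_simps)
    thus ?thesis using k1 by (simp add: le_divide_eq)
  qed
  have "ereal N \<le> ereal (1 / (1 - k)) * ereal m"
    using key k1 by (simp add: divide_inverse mult.commute)
  also have "\<dots> \<le> ereal (1 / (1 - k)) * SUPV"
    using mS k1 by (intro ereal_mult_left_mono) auto
  finally show ?thesis unfolding N_def SUPV_def k_def LF_def LG_def .
qed


end
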